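(* Let $p,q,l\in\mathbb N$ with $l\le p+q$. Let $S$ be the set of subsets of $\{1,\dots,p+q\}$ of cardinality $l$, and $S^+=\{I\in S:\#(I\cap\{1,\dots,p\})=\min\{p,l\}\}$. For $z_1,\dots,z_{p+q}\in\mathbb R^l$ and $I=\{i_1<\dots<i_l\}$ write $z_I=\det(z_{i_1},\dots,z_{i_l})$ (the determinant of the matrix with these columns). For $\theta\in M_{p\times q}(\mathbb R)$ set $z_i^\theta=z_i+\sum_{j=1}^q\theta_{ij}z_{p+j}$ for $i\le p$, $z_i^\theta=z_i$ for $i>p$, and $z_I^\theta=\det(z^\theta_{i_1},\dots,z^\theta_{i_l})$. Let $F$ be a set and for each $\rho\in F$ let $\nu^\rho=\prod_{1\le i\le p,1\le j\le q}\nu^\rho_{ij}$ be a product of Borel measures on $\mathbb R$ (viewed as a measure on $M_{p\times q}(\mathbb R)$). Assume there are constants $\lambda,C_1,C_2>0$ such that for all $i,j$, all $\rho\in F$, all $x\in\mathbb R$ and $y>0$: $\nu^\rho_{ij}([x-y,x+y])\le C_1y^\lambda$ and $\mathrm{supp}(\nu^\rho_{ij})\subset[-C_2,C_2]$. Then there exist constants $C_3>0$ and $\delta>0$ such that for all $z_1,\dots,z_{p+q}\in\mathbb R^l$ with $\max\{|z_I|:I\in S\}=1$, all $\rho\in F$ and all $0<\varepsilon<1$, $$\nu^\rho\big(\{\theta\in M_{p\times q}(\mathbb R):\max\{|z_I^\theta|:I\in S^+\}\le\varepsilon\}\big)\le C_3\varepsilon^\delta.$$ *)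

theory Defs
  imports "HOL-Probability.Probability" "Jordan_Normal_Form.Determinant"
begin

text \<open>Vectors of R^l are represented as functions nat => real, only the
components 0..<l matter.\<close>

definition zdet :: "nat \<Rightarrow> (nat \<Rightarrow> nat \<Rightarrow> real) \<Rightarrow> nat set \<Rightarrow> real" where
  "zdet l z I = Determinant.det (mat l l (\<lambda>(r, c). z (sorted_list_of_set I ! c) r))"

definition ztheta :: "nat \<Rightarrow> nat \<Rightarrow> (nat \<times> nat \<Rightarrow> real) \<Rightarrow> (nat \<Rightarrow> nat \<Rightarrow> real) \<Rightarrow> nat \<Rightarrow> nat \<Rightarrow> real" where
  "ztheta p q \<theta> z i = (if 1 \<le> i \<and> i \<le> p
      then (\<lambda>r. z i r + (\<Sum>j = 1..q. \<theta> (i, j) * z (p + j) r))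
      else z i)"

definition Sset :: "nat \<Rightarrow> nat \<Rightarrow> nat \<Rightarrow> nat set set" where
  "Sset p q l = {I. I \<subseteq> {1..p+q} \<and> card I = l}"

definition Splus :: "nat \<Rightarrow> nat \<Rightarrow> nat \<Rightarrow> nat set set" where
  "Splus p q l = {I \<in> Sset p q l. card (I \<inter> {1..p}) = min p l}"

end

theory Submission
  imports Defs
begin


definition goodm :: "real \<Rightarrow> real \<Rightarrow> real \<Rightarrow> real measure \<Rightarrow> bool" where
 "goodm lam C1 C2 m \<longleftrightarrow> sets m = sets borel \<and>
    (\<forall>x y. y > 0 \<longrightarrow> emeasure m {x-y..x+y} \<le> ennreal (C1 * y powr lam)) \<and>
    emeasure m (UNIV - {-C2..C2}) = 0"

lemma goodm_space: "goodm lam C1 C2 m \<Longrightarrow> space m = UNIV"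
  unfolding goodm_def by (metis sets_eq_imp_space_eq space_borel)

lemma goodm_mass:
  assumes "goodm lam C1 C2 m" "C2 > 0"
  shows "emeasure m (space m) \<le> ennreal (C1 * C2 powr lam)"
proof -
  have sp: "space m = UNIV" using goodm_space[OF assms(1)] .
  have s: "sets m = sets borel" using assms(1) unfolding goodm_def by auto
  have "emeasure m (space m) \<le> emeasure m {-C2..C2} + emeasure m (UNIV - {-C2..C2})"
    using emeasure_subadditive[of "{-C2..C2}" m "UNIV - {-C2..C2}"] s sp by auto
  also have "\<dots> = emeasure m {0-C2..0+C2}" using assms(1) unfolding goodm_def by simp
  also have "\<dots> \<le> ennreal (C1 * C2 powr lam)" using assms unfolding goodm_def by blast
  finally show ?thesis .
qed

lemma goodm_finite:
  assumes "goodm lam C1 C2 m" "C2 > 0"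
  shows "finite_measure m"
  using goodm_mass[OF assms] by (intro finite_measureI) (auto simp: top_unique)

lemma goodm_psf:
  assumes "\<And>k. goodm lam C1 C2 (\<nu> k)" "C2 > 0"
  shows "product_sigma_finite \<nu>"
  unfolding product_sigma_finite_def
  using goodm_finite[OF assms(1) assms(2)] finite_measure.axioms(1) by blast

lemma PiM_mass:
  assumes "\<And>k. goodm lam C1 C2 (\<nu> k)" "C2 > 0" "finite K" "C1 > 0"
  shows "emeasure (PiM K \<nu>) (space (PiM K \<nu>)) \<le> ennreal ((C1 * C2 powr lam) ^ card K)"
proof -
  interpret product_sigma_finite \<nu> using goodm_psf[OF assms(1,2)] .
  have "emeasure (PiM K \<nu>) (space (PiM K \<nu>)) = (\<Prod>i\<in>K. emeasure (\<nu> i) (space (\<nu> i)))"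
    unfolding space_PiM using emeasure_PiM[OF assms(3)] by simp
  also have "\<dots> \<le> (\<Prod>i\<in>K. ennreal (C1 * C2 powr lam))"
    by (intro prod_mono_ennreal goodm_mass assms)
  also have "\<dots> = ennreal ((C1 * C2 powr lam) ^ card K)"
    using assms by (simp add: prod_ennreal ennreal_power)
  finally show ?thesis .
qed

definition maff :: "'k set \<Rightarrow> (('k \<Rightarrow> real) \<Rightarrow> real) \<Rightarrow> bool" where
  "maff K P \<longleftrightarrow> (\<forall>k\<in>K. \<forall>\<theta> y. P (\<theta>(k:=y)) = P (\<theta>(k:=0)) + y * (P (\<theta>(k:=1)) - P (\<theta>(k:=0))))"

definition Good :: "'k set \<Rightarrow> real \<Rightarrow> real \<Rightarrow> real \<Rightarrow> real \<Rightarrow> real \<Rightarrow> bool" where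
"Good K lam C1 C2 C \<delta> \<longleftrightarrow> (\<forall>\<nu> P \<epsilon>. (\<forall>k. goodm lam C1 C2 (\<nu> k)) \<longrightarrow> P \<in> borel_measurable (PiM K \<nu>)
   \<longrightarrow> maff K P \<longrightarrow> (\<exists>\<theta>0\<in>PiE K (\<lambda>_. {0::real,1}). 1 \<le> \<bar>P \<theta>0\<bar>) \<longrightarrow> \<epsilon> > 0 \<longrightarrow>
   emeasure (PiM K \<nu>) {\<theta> \<in> space (PiM K \<nu>). \<bar>P \<theta>\<bar> \<le> \<epsilon>} \<le> ennreal (C * \<epsilon> powr \<delta>))"

lemma Good_empty:
  assumes "C1 > 0" "C2 > 0"
  shows "Good {} lam C1 C2 1 1"
  unfolding Good_def
proof (intro allI impI)
  fix \<nu> :: "'k \<Rightarrow> real measure" and P :: "('k \<Rightarrow> real) \<Rightarrow> real" and \<epsilon> :: real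
  assume g: "\<forall>k. goodm lam C1 C2 (\<nu> k)" and c: "\<exists>\<theta>0\<in>PiE {} (\<lambda>_. {0::real,1}). 1 \<le> \<bar>P \<theta>0\<bar>"
    and e: "\<epsilon> > 0"
  have sp: "space (PiM {} \<nu>) = {\<lambda>_. undefined}" by (simp add: PiM_empty)
  have c': "1 \<le> \<bar>P (\<lambda>_. undefined)\<bar>" using c by simp
  show "emeasure (PiM {} \<nu>) {\<theta> \<in> space (PiM {} \<nu>). \<bar>P \<theta>\<bar> \<le> \<epsilon>} \<le> ennreal (1 * \<epsilon> powr 1)"
  proof (cases "\<epsilon> < 1")
    case True
    have eq: "{\<theta> \<in> space (PiM {} \<nu>). \<bar>P \<theta>\<bar> \<le> \<epsilon>} = {}" using True sp c' by auto
    show ?thesis by (subst eq) simp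
  next
    case False
    have "emeasure (PiM {} \<nu>) {\<theta> \<in> space (PiM {} \<nu>). \<bar>P \<theta>\<bar> \<le> \<epsilon>} \<le> emeasure (PiM {} \<nu>) {\<lambda>_. undefined}"
      by (rule emeasure_mono) (auto simp: sp PiM_empty)
    also have "\<dots> = 1" by simp
    also have "\<dots> \<le> ennreal (1 * \<epsilon> powr 1)" using False e by simp
    finally show ?thesis .
  qed
qed

lemma maff_lin:
  assumes "maff K f" "maff K g"
  shows "maff K (\<lambda>x. a * f x + b * g x)"
  unfolding maff_def
proof (intro ballI allI)
  fix k \<theta> y assume k: "k \<in> K"
  have hf: "f (\<theta>(k:=y)) = f (\<theta>(k:=0)) + y * (f (\<theta>(k:=1)) - f (\<theta>(k:=0)))"
    using assms(1) k unfolding maff_def by blast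
  have hg: "g (\<theta>(k:=y)) = g (\<theta>(k:=0)) + y * (g (\<theta>(k:=1)) - g (\<theta>(k:=0)))"
    using assms(2) k unfolding maff_def by blast
  show "a * f (\<theta>(k := y)) + b * g (\<theta>(k := y)) =
       a * f (\<theta>(k := 0)) + b * g (\<theta>(k := 0)) +
       y * (a * f (\<theta>(k := 1)) + b * g (\<theta>(k := 1)) - (a * f (\<theta>(k := 0)) + b * g (\<theta>(k := 0))))"
    unfolding hf hg by (simp add: algebra_simps)
qed

lemma maff_upd:
  assumes "maff (insert k K) P" "k \<notin> K"
  shows "maff K (\<lambda>x. P (x(k:=t)))"
  unfolding maff_def
proof (intro ballI allI)
  fix j \<theta> y assume j: "j \<in> K"
  then have jk: "j \<noteq> k" using assms(2) by auto
  have "P ((\<theta>(k:=t))(j:=y)) = P ((\<theta>(k:=t))(j:=0)) + y * (P ((\<theta>(k:=t))(j:=1)) - P ((\<theta>(k:=t))(j:=0)))"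
    using assms(1) j unfolding maff_def by blast
  then show "P (\<theta>(j := y, k := t)) = P (\<theta>(j := 0, k := t)) + y * (P (\<theta>(j := 1, k := t)) - P (\<theta>(j := 0, k := t)))"
    using jk by (simp add: fun_upd_twist)
qed

lemma inner_bound:
  fixes m :: "real measure" and a b \<epsilon> :: real
  assumes g: "goodm lam C1 C2 m" and C2: "C2 > 0" and e: "0 < \<epsilon>" and lam: "lam > 0" and C1: "C1 > 0"
  shows "emeasure m {y. \<bar>b + y * a\<bar> \<le> \<epsilon>} \<le> ennreal (C1 * \<epsilon> powr (lam/2)) +
     (if \<bar>a\<bar> \<le> sqrt \<epsilon> \<and> \<bar>b\<bar> \<le> \<epsilon> + C2 * sqrt \<epsilon> then ennreal (C1 * C2 powr lam) else 0)"
    (is "emeasure m ?Y \<le> ?R")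
proof -
  have sb: "sets m = sets borel" using g unfolding goodm_def by auto
  have Yb: "?Y \<in> sets borel" by measurable
  then have Ym: "?Y \<in> sets m" using sb by simp
  have se: "sqrt \<epsilon> > 0" using e by simp
  consider (big) "\<bar>a\<bar> > sqrt \<epsilon>" | (out) "\<bar>a\<bar> \<le> sqrt \<epsilon>" "\<bar>b\<bar> > \<epsilon> + C2 * sqrt \<epsilon>"
    | (inD) "\<bar>a\<bar> \<le> sqrt \<epsilon>" "\<bar>b\<bar> \<le> \<epsilon> + C2 * sqrt \<epsilon>" by linarith
  then show ?thesis
  proof cases
    case big
    define r where "r = \<epsilon> / \<bar>a\<bar>"
    define x0 where "x0 = - b / a"
    have a0: "a \<noteq> 0" using big se by auto
    have rpos: "r > 0" using e a0 by (simp add: r_def)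
    have sub: "?Y \<subseteq> {x0 - r..x0 + r}"
    proof
      fix y assume "y \<in> ?Y"
      then have h: "\<bar>b + y * a\<bar> \<le> \<epsilon>" by simp
      have "y - x0 = (b + y * a) / a" using a0 by (simp add: x0_def field_simps)
      then have "\<bar>y - x0\<bar> = \<bar>b + y * a\<bar> / \<bar>a\<bar>" by simp
      also have "\<dots> \<le> r" unfolding r_def using h a0 by (simp add: divide_right_mono)
      finally show "y \<in> {x0 - r..x0 + r}" by (auto simp: abs_le_iff)
    qed
    have "r \<le> \<epsilon> / sqrt \<epsilon>" unfolding r_def using big se e
      by (intro divide_left_mono) (auto intro!: mult_pos_pos)
    also have "\<epsilon> / sqrt \<epsilon> = sqrt \<epsilon>" using e by (metis real_div_sqrt less_imp_le)
    finally have rle: "r \<le> sqrt \<epsilon>" .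
    have "emeasure m ?Y \<le> emeasure m {x0 - r..x0 + r}"
      by (rule emeasure_mono[OF sub]) (simp add: sb)
    also have "\<dots> \<le> ennreal (C1 * r powr lam)" using g rpos unfolding goodm_def by blast
    also have "\<dots> \<le> ennreal (C1 * \<epsilon> powr (lam/2))"
    proof -
      have "r powr lam \<le> sqrt \<epsilon> powr lam" using rle rpos lam by (intro powr_mono2) auto
      also have "sqrt \<epsilon> powr lam = \<epsilon> powr (lam/2)"
        using e by (simp add: powr_half_sqrt[symmetric] powr_powr)
      finally have "C1 * r powr lam \<le> C1 * \<epsilon> powr (lam/2)"
        using C1 by simp
      then show ?thesis by (rule ennreal_leI)
    qed
    also have "\<dots> \<le> ?R" by simp
    finally show ?thesis .
  next
    case out
    have sub: "?Y \<subseteq> UNIV - {-C2..C2}"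
    proof
      fix y assume "y \<in> ?Y"
      then have h: "\<bar>b + y * a\<bar> \<le> \<epsilon>" by simp
      show "y \<in> UNIV - {-C2..C2}"
      proof (rule ccontr)
        assume "y \<notin> UNIV - {-C2..C2}"
        then have "\<bar>y\<bar> \<le> C2" by auto
        then have "\<bar>y\<bar> * \<bar>a\<bar> \<le> C2 * sqrt \<epsilon>" using out(1) by (intro mult_mono) auto
        then have "\<bar>y * a\<bar> \<le> C2 * sqrt \<epsilon>" by (simp add: abs_mult)
        then show False using h out(2) by linarith
      qed
    qed
    have "emeasure m ?Y \<le> emeasure m (UNIV - {-C2..C2})"
      by (rule emeasure_mono[OF sub]) (simp add: sb)
    also have "\<dots> = 0" using g unfolding goodm_def by blast
    finally show ?thesis by simp
  next
    case inD
    have "emeasure m ?Y \<le> emeasure m (space m)" by (rule emeasure_space)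
    also have "\<dots> \<le> ennreal (C1 * C2 powr lam)" by (rule goodm_mass[OF g C2])
    also have "\<dots> \<le> ?R" using inD by simp
    finally show ?thesis .
  qed
qed

lemma Good_insert:
  fixes K :: "'k set"
  assumes fin: "finite K" and kK: "k \<notin> K" and lam: "lam > 0" and C1: "C1 > 0" and C2: "C2 > 0"
    and IH: "Good K lam C1 C2 C \<delta>" and Cpos: "C > 0" and dpos: "\<delta> > 0"
  shows "Good (insert k K) lam C1 C2
     ((C1 * C2 powr lam) ^ Suc (card K) + C1 * (C1 * C2 powr lam) ^ card K
        + (C1 * C2 powr lam) * C * (2 * (1 + C2)) powr \<delta>) (min (lam/2) (\<delta>/2))"
  unfolding Good_def
proof (intro allI impI)
  fix \<nu> :: "'k \<Rightarrow> real measure" and P :: "('k \<Rightarrow> real) \<Rightarrow> real" and \<epsilon> :: real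
  assume g: "\<forall>k. goodm lam C1 C2 (\<nu> k)" and Pm: "P \<in> borel_measurable (PiM (insert k K) \<nu>)"
    and maf: "maff (insert k K) P" and cor: "\<exists>\<theta>0\<in>PiE (insert k K) (\<lambda>_. {0::real,1}). 1 \<le> \<bar>P \<theta>0\<bar>"
    and e: "\<epsilon> > 0"
  define M0 where "M0 = C1 * C2 powr lam"
  define C' where "C' = M0 ^ Suc (card K) + C1 * M0 ^ card K + M0 * C * (2 * (1 + C2)) powr \<delta>"
  define \<delta>' where "\<delta>' = min (lam/2) (\<delta>/2)"
  let ?K' = "insert k K"
  let ?X = "{\<theta> \<in> space (PiM ?K' \<nu>). \<bar>P \<theta>\<bar> \<le> \<epsilon>}"
  interpret product_sigma_finite \<nu> using goodm_psf g C2 by blast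
  have M0pos: "M0 > 0" unfolding M0_def using C1 C2 by simp
  have sp: "\<And>i. space (\<nu> i) = UNIV" using g goodm_space by blast
  have Xm: "?X \<in> sets (PiM ?K' \<nu>)" using Pm by measurable
  have "emeasure (PiM ?K' \<nu>) ?X \<le> ennreal (C' * \<epsilon> powr \<delta>')"
  proof (cases "\<epsilon> < 1")
    case False
    have "emeasure (PiM ?K' \<nu>) ?X \<le> emeasure (PiM ?K' \<nu>) (space (PiM ?K' \<nu>))"
      by (rule emeasure_mono) auto
    also have "\<dots> \<le> ennreal (M0 ^ card ?K')" unfolding M0_def
      using PiM_mass[where \<nu>=\<nu> and K="insert k K"] g C1 C2 fin by auto
    also have "\<dots> \<le> ennreal (C' * \<epsilon> powr \<delta>')"
    proof (rule ennreal_leI)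
      have "M0 ^ card ?K' \<le> C'" unfolding C'_def using fin kK M0pos C1 Cpos
        by (simp add: less_imp_le)
      also have "\<dots> \<le> C' * \<epsilon> powr \<delta>'"
      proof -
        have "1 \<le> \<epsilon> powr \<delta>'" using False dpos lam unfolding \<delta>'_def
          by (intro ge_one_powr_ge_zero) auto
        moreover have "C' \<ge> 0" unfolding C'_def using M0pos C1 Cpos by simp
        ultimately show ?thesis by (metis mult_left_mono mult.right_neutral)
      qed
      finally show "M0 ^ card ?K' \<le> C' * \<epsilon> powr \<delta>'" .
    qed
    finally show ?thesis .
  next
    case True
    define A where "A x = P (x(k:=1)) - P (x(k:=0))" for x
    define B where "B x = P (x(k:=0))" for x
    have upd_sp: "\<And>x y. x \<in> space (PiM K \<nu>) \<Longrightarrow> x(k:=y) \<in> space (PiM ?K' \<nu>)"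
      by (auto simp: space_PiM PiE_iff sp)
    have updm: "\<And>c. (\<lambda>x. x(k:=c)) \<in> measurable (PiM K \<nu>) (PiM ?K' \<nu>)"
      by (rule measurable_fun_upd[where J=K]) (auto simp: sp)
    have Pc: "\<And>c. (\<lambda>x. P (x(k:=c))) \<in> borel_measurable (PiM K \<nu>)"
      using measurable_comp[OF updm Pm] by (simp add: comp_def)
    have Am: "A \<in> borel_measurable (PiM K \<nu>)" unfolding A_def using Pc by measurable
    have Bm: "B \<in> borel_measurable (PiM K \<nu>)" unfolding B_def using Pc by measurable
    have PAB: "P (x(k:=y)) = B x + y * A x" for x y
    proof -
      have "P (x(k:=y)) = P (x(k:=0)) + y * (P (x(k:=1)) - P (x(k:=0)))"
        using maf unfolding maff_def by blast
      then show ?thesis by (simp add: A_def B_def)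
    qed
    define D where "D = {x\<in>space (PiM K \<nu>). \<bar>A x\<bar> \<le> sqrt \<epsilon> \<and> \<bar>B x\<bar> \<le> \<epsilon> + C2 * sqrt \<epsilon>}"
    have Dm: "D \<in> sets (PiM K \<nu>)" unfolding D_def using Am Bm by measurable
    define c where "c = C1 * \<epsilon> powr (lam/2)"
    have cpos: "c \<ge> 0" unfolding c_def using C1 by simp
    have pw: "(\<integral>\<^sup>+y. indicator ?X (x(k:=y)) \<partial>\<nu> k) \<le> ennreal c + ennreal M0 * indicator D x"
      if x: "x \<in> space (PiM K \<nu>)" for x
    proof -
      let ?Y = "{y. \<bar>B x + y * A x\<bar> \<le> \<epsilon>}"
      have sb: "sets (\<nu> k) = sets borel" using g unfolding goodm_def by auto
      have Yb: "?Y \<in> sets borel" by measurable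
      have "(\<integral>\<^sup>+y. indicator ?X (x(k:=y)) \<partial>\<nu> k) = (\<integral>\<^sup>+y. indicator ?Y y \<partial>\<nu> k)"
        by (rule nn_integral_cong) (auto simp: indicator_def PAB upd_sp[OF x])
      also have "\<dots> = emeasure (\<nu> k) ?Y" using Yb sb by simp
      also have "\<dots> \<le> ennreal (C1 * \<epsilon> powr (lam/2)) +
         (if \<bar>A x\<bar> \<le> sqrt \<epsilon> \<and> \<bar>B x\<bar> \<le> \<epsilon> + C2 * sqrt \<epsilon> then ennreal (C1 * C2 powr lam) else 0)"
        using inner_bound g C2 e lam C1 by blast
      also have "\<dots> = ennreal c + ennreal M0 * indicator D x"
        using x by (simp add: c_def M0_def D_def indicator_def)
      finally show ?thesis .
    qed
    have eD: "emeasure (PiM K \<nu>) D \<le> ennreal (C * (2 * (1 + C2) * sqrt \<epsilon>) powr \<delta>)"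
    proof -
      obtain \<theta>0 where t0: "\<theta>0 \<in> PiE ?K' (\<lambda>_. {0::real,1})" "1 \<le> \<bar>P \<theta>0\<bar>" using cor by blast
      define \<theta>1 where "\<theta>1 = \<theta>0(k:=undefined)"
      have t1: "\<theta>1 \<in> PiE K (\<lambda>_. {0::real,1})" using t0(1) kK
        by (auto simp: \<theta>1_def PiE_iff extensional_def)
      have "\<theta>1(k := \<theta>0 k) = \<theta>0" by (simp add: \<theta>1_def)
      then have "P \<theta>0 = B \<theta>1 + \<theta>0 k * A \<theta>1" using PAB by metis
      moreover have "\<theta>0 k = 0 \<or> \<theta>0 k = 1" using t0(1) by (auto simp: PiE_iff)
      ultimately have cases: "1 \<le> \<bar>2 * A \<theta>1\<bar> \<or> 1 \<le> \<bar>2 * B \<theta>1\<bar>" using t0(2) by auto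
      define \<eta> where "\<eta> = 2 * (1 + C2) * sqrt \<epsilon>"
      have eta: "\<eta> > 0" unfolding \<eta>_def using e C2 by simp
      have se1: "\<epsilon> \<le> sqrt \<epsilon>"
      proof -
        have "sqrt \<epsilon> \<le> 1" using True by simp
        then have "sqrt \<epsilon> * sqrt \<epsilon> \<le> sqrt \<epsilon> * 1" using e by (intro mult_left_mono) auto
        then show ?thesis using e by simp
      qed
      have etaeq: "\<eta> = 2 * sqrt \<epsilon> + 2 * (C2 * sqrt \<epsilon>)" by (simp add: \<eta>_def algebra_simps)
      have c2s: "0 \<le> C2 * sqrt \<epsilon>" using C2 e by simp
      have mA: "maff K (\<lambda>x. 2 * A x)"
        using maff_lin[OF maff_upd[OF maf kK] maff_upd[OF maf kK], of 2 1 "-2" 0]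
        by (simp add: A_def algebra_simps)
      have mB: "maff K (\<lambda>x. 2 * B x)"
        using maff_lin[OF maff_upd[OF maf kK] maff_upd[OF maf kK], of 2 0 0 0]
        by (simp add: B_def)
      from cases show ?thesis
      proof
        assume h: "1 \<le> \<bar>2 * A \<theta>1\<bar>"
        have "emeasure (PiM K \<nu>) D \<le> emeasure (PiM K \<nu>) {x\<in>space (PiM K \<nu>). \<bar>2 * A x\<bar> \<le> \<eta>}"
        proof (rule emeasure_mono)
          show "D \<subseteq> {x\<in>space (PiM K \<nu>). \<bar>2 * A x\<bar> \<le> \<eta>}"
            unfolding D_def using etaeq c2s by auto
          show "{x\<in>space (PiM K \<nu>). \<bar>2 * A x\<bar> \<le> \<eta>} \<in> sets (PiM K \<nu>)" using Am by measurable
        qed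
        also have "\<dots> \<le> ennreal (C * \<eta> powr \<delta>)"
          by (rule IH[unfolded Good_def, rule_format, of \<nu> "\<lambda>x. 2 * A x" \<eta>])
             (use g mA t1 h eta Am in auto)
        finally show ?thesis unfolding \<eta>_def .
      next
        assume h: "1 \<le> \<bar>2 * B \<theta>1\<bar>"
        have "emeasure (PiM K \<nu>) D \<le> emeasure (PiM K \<nu>) {x\<in>space (PiM K \<nu>). \<bar>2 * B x\<bar> \<le> \<eta>}"
        proof (rule emeasure_mono)
          show "D \<subseteq> {x\<in>space (PiM K \<nu>). \<bar>2 * B x\<bar> \<le> \<eta>}"
            unfolding D_def using etaeq c2s se1 by auto
          show "{x\<in>space (PiM K \<nu>). \<bar>2 * B x\<bar> \<le> \<eta>} \<in> sets (PiM K \<nu>)" using Bm by measurable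
        qed
        also have "\<dots> \<le> ennreal (C * \<eta> powr \<delta>)"
          by (rule IH[unfolded Good_def, rule_format, of \<nu> "\<lambda>x. 2 * B x" \<eta>])
             (use g mB t1 h eta Bm in auto)
        finally show ?thesis unfolding \<eta>_def .
      qed
    qed
    have "emeasure (PiM ?K' \<nu>) ?X = (\<integral>\<^sup>+\<theta>. indicator ?X \<theta> \<partial>PiM ?K' \<nu>)"
      using Xm by simp
    also have "\<dots> = (\<integral>\<^sup>+x. (\<integral>\<^sup>+y. indicator ?X (x(k:=y)) \<partial>\<nu> k) \<partial>PiM K \<nu>)"
      by (rule product_nn_integral_insert[OF fin kK]) (use Xm in measurable)
    also have "\<dots> \<le> (\<integral>\<^sup>+x. (ennreal c + ennreal M0 * indicator D x) \<partial>PiM K \<nu>)"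
      by (rule nn_integral_mono) (rule pw)
    also have "\<dots> = (\<integral>\<^sup>+x. ennreal c \<partial>PiM K \<nu>) + (\<integral>\<^sup>+x. ennreal M0 * indicator D x \<partial>PiM K \<nu>)"
      by (rule nn_integral_add) (use Dm in auto)
    also have "\<dots> = ennreal c * emeasure (PiM K \<nu>) (space (PiM K \<nu>)) + ennreal M0 * emeasure (PiM K \<nu>) D"
      using Dm by (simp add: nn_integral_cmult_indicator)
    also have "\<dots> \<le> ennreal c * ennreal (M0 ^ card K) + ennreal M0 * ennreal (C * (2 * (1 + C2) * sqrt \<epsilon>) powr \<delta>)"
      using PiM_mass[where \<nu>=\<nu> and K=K] g C1 C2 fin eD unfolding M0_def
      by (intro add_mono mult_left_mono) auto
    also have "\<dots> = ennreal (c * M0 ^ card K + M0 * (C * (2 * (1 + C2) * sqrt \<epsilon>) powr \<delta>))"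
      using cpos M0pos Cpos by (simp add: ennreal_mult ennreal_plus[symmetric])
    also have "\<dots> \<le> ennreal (C' * \<epsilon> powr \<delta>')"
    proof (rule ennreal_leI)
      have e1: "\<epsilon> powr (lam/2) \<le> \<epsilon> powr \<delta>'" unfolding \<delta>'_def using e True
        by (intro powr_mono') auto
      have e2: "(2 * (1 + C2) * sqrt \<epsilon>) powr \<delta> = (2 * (1 + C2)) powr \<delta> * \<epsilon> powr (\<delta>/2)"
        using e C2 by (simp add: powr_mult powr_half_sqrt[symmetric] powr_powr)
      have e3: "\<epsilon> powr (\<delta>/2) \<le> \<epsilon> powr \<delta>'" unfolding \<delta>'_def using e True
        by (intro powr_mono') auto
      have "c * M0 ^ card K \<le> C1 * M0 ^ card K * \<epsilon> powr \<delta>'"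
        unfolding c_def using e1 C1 M0pos by (simp add: mult_left_mono)
      moreover have "M0 * (C * (2 * (1 + C2) * sqrt \<epsilon>) powr \<delta>) \<le> M0 * C * (2 * (1 + C2)) powr \<delta> * \<epsilon> powr \<delta>'"
        unfolding e2 using e3 M0pos Cpos C2 by (simp add: mult_left_mono)
      moreover have "0 \<le> M0 ^ Suc (card K) * \<epsilon> powr \<delta>'" using M0pos by simp
      ultimately show "c * M0 ^ card K + M0 * (C * (2 * (1 + C2) * sqrt \<epsilon>) powr \<delta>) \<le> C' * \<epsilon> powr \<delta>'"
        unfolding C'_def by (simp add: algebra_simps)
    qed
    finally show ?thesis .
  qed
  then show "emeasure (PiM ?K' \<nu>) ?X \<le> ennreal (((C1 * C2 powr lam) ^ Suc (card K) + C1 * (C1 * C2 powr lam) ^ card K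
        + (C1 * C2 powr lam) * C * (2 * (1 + C2)) powr \<delta>) * \<epsilon> powr min (lam/2) (\<delta>/2))"
    unfolding C'_def \<delta>'_def M0_def .
qed

lemma Good_exists:
  fixes K :: "'k set"
  assumes "finite K" "lam > 0" "C1 > 0" "C2 > 0"
  shows "\<exists>C>0. \<exists>\<delta>>0. Good K lam C1 C2 C \<delta>"
  using assms(1)
proof (induction K rule: finite_induct)
  case empty
  show ?case using Good_empty[OF assms(3,4)] by (intro exI[of _ 1]) (auto intro!: exI[of _ 1])
next
  case (insert k K)
  then obtain C \<delta> where h: "C > 0" "\<delta> > 0" "Good K lam C1 C2 C \<delta>" by blast
  have M0: "C1 * C2 powr lam > 0" using assms by simp
  show ?case
    apply (rule exI, rule conjI[rotated], rule exI, rule conjI[rotated])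
      apply (rule Good_insert[OF insert(1,2) assms(2,3,4) h(3) h(1,2)])
    using M0 h assms by (auto intro!: add_pos_nonneg)
qed



lemma det_col_lin:
  fixes x y :: "nat \<Rightarrow> real"
  assumes c0: "c0 < n"
  shows "det (mat n n (\<lambda>(r,c). if c = c0 then x r + s * y r else f c r)) =
         det (mat n n (\<lambda>(r,c). if c = c0 then x r else f c r)) +
         s * det (mat n n (\<lambda>(r,c). if c = c0 then y r else f c r))"
proof -
  have key: "det (mat n n (\<lambda>(r,c). if c = c0 then g r else f c r)) =
     (\<Sum>p | p permutes {0..<n}. signof p * (g (p c0) * (\<Prod>j\<in>{..<n}-{c0}. f j (p j))))" for g :: "nat \<Rightarrow> real"
  proof -
    have "det (mat n n (\<lambda>(r,c). if c = c0 then g r else f c r)) =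
      (\<Sum>p | p permutes {0..<n}. signof p * (\<Prod>j<n. mat n n (\<lambda>(r,c). if c = c0 then g r else f c r) $$ (p j, j)))"
      by (rule det_col) simp
    also have "\<dots> = (\<Sum>p | p permutes {0..<n}. signof p * (g (p c0) * (\<Prod>j\<in>{..<n}-{c0}. f j (p j))))"
    proof (rule sum.cong[OF refl])
      fix p assume "p \<in> {p. p permutes {0..<n}}"
      then have p: "p permutes {0..<n}" by simp
      have pj: "j < n \<Longrightarrow> p j < n" for j using permutes_in_image[OF p, of j] by simp
      have "(\<Prod>j<n. mat n n (\<lambda>(r,c). if c = c0 then g r else f c r) $$ (p j, j)) =
            (\<Prod>j<n. if j = c0 then g (p j) else f j (p j))"
        by (rule prod.cong) (auto simp: pj)
      also have "\<dots> = (if c0 = c0 then g (p c0) else f c0 (p c0)) * (\<Prod>j\<in>{..<n}-{c0}. if j = c0 then g (p j) else f j (p j))"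
        by (rule prod.remove) (use c0 in auto)
      also have "\<dots> = g (p c0) * (\<Prod>j\<in>{..<n}-{c0}. f j (p j))"
        by (intro arg_cong2[where f="(*)"] prod.cong) auto
      finally show "signof p * (\<Prod>j<n. mat n n (\<lambda>(r,c). if c = c0 then g r else f c r) $$ (p j, j)) =
        signof p * (g (p c0) * (\<Prod>j\<in>{..<n}-{c0}. f j (p j)))" by simp
    qed
    finally show ?thesis .
  qed
  show ?thesis
    unfolding key[of "\<lambda>r. x r + s * y r"] key[of x] key[of y] sum_distrib_left sum.distrib[symmetric]
    by (rule sum.cong[OF refl]) (simp add: algebra_simps)
qed

lemma det_col_lin2:
  fixes F Fa Fb :: "nat \<Rightarrow> nat \<Rightarrow> real"
  assumes cz: "cz < n" and a1: "\<And>r c. c \<noteq> cz \<Longrightarrow> c < n \<Longrightarrow> r < n \<Longrightarrow> Fa c r = F c r"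
    and a2: "\<And>r c. c \<noteq> cz \<Longrightarrow> c < n \<Longrightarrow> r < n \<Longrightarrow> Fb c r = F c r"
    and a3: "\<And>r. r < n \<Longrightarrow> F cz r = Fa cz r + s * Fb cz r"
  shows "det (mat n n (\<lambda>(r,c). F c r)) = det (mat n n (\<lambda>(r,c). Fa c r)) + s * det (mat n n (\<lambda>(r,c). Fb c r))"
proof -
  have e1: "mat n n (\<lambda>(r,c). F c r) = mat n n (\<lambda>(r,c). if c = cz then Fa cz r + s * Fb cz r else F c r)"
    by (rule eq_matI) (auto simp: a3)
  have e2: "mat n n (\<lambda>(r,c). Fa c r) = mat n n (\<lambda>(r,c). if c = cz then Fa cz r else F c r)"
    by (rule eq_matI) (auto simp: a1)
  have e3: "mat n n (\<lambda>(r,c). Fb c r) = mat n n (\<lambda>(r,c). if c = cz then Fb cz r else F c r)"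
    by (rule eq_matI) (auto simp: a2)
  show ?thesis unfolding e1 e2 e3 by (rule det_col_lin[OF cz])
qed

lemma det_perm_cols:
  fixes f :: "nat \<Rightarrow> nat \<Rightarrow> real"
  assumes p: "\<pi> permutes {0..<n}"
  shows "det (mat n n (\<lambda>(r,c). f (\<pi> c) r)) = signof \<pi> * det (mat n n (\<lambda>(r,c). f c r))"
proof -
  let ?A = "mat n n (\<lambda>(r,c). f c r)"
  have pj: "j < n \<Longrightarrow> \<pi> j < n" for j using permutes_in_image[OF p, of j] by simp
  have T: "transpose_mat ?A = mat n n (\<lambda>(i,j). f i j)" by (rule eq_matI) auto
  have "det (mat n n (\<lambda>(i,j). transpose_mat ?A $$ (\<pi> i, j))) = signof \<pi> * det (transpose_mat ?A)"
    by (rule det_permute_rows[OF _ p]) simp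
  also have "det (transpose_mat ?A) = det ?A" by (rule det_transpose[where n=n]) simp
  also have "mat n n (\<lambda>(i,j). transpose_mat ?A $$ (\<pi> i, j)) = transpose_mat (mat n n (\<lambda>(r,c). f (\<pi> c) r))"
    by (rule eq_matI) (auto simp: pj)
  also have "det (transpose_mat (mat n n (\<lambda>(r,c). f (\<pi> c) r))) = det (mat n n (\<lambda>(r,c). f (\<pi> c) r))"
    by (rule det_transpose[where n=n]) simp
  finally show ?thesis .
qed

lemma corner:
  fixes u w :: "nat \<Rightarrow> nat \<Rightarrow> real"
  assumes "finite C" "C \<subseteq> {0..<n}"
  shows "\<exists>s. (\<forall>c. s c \<in> {0,1}) \<and> \<bar>det (mat n n (\<lambda>(r,c). w c r))\<bar> \<le>
     2 ^ card C * \<bar>det (mat n n (\<lambda>(r,c). if c \<in> C then u c r + s c * w c r else w c r))\<bar>"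
  using assms
proof (induction C rule: finite_induct)
  case empty
  show ?case by (intro exI[of _ "\<lambda>_. 0"]) simp
next
  case (insert c0 C)
  then obtain s' where s': "\<forall>c. s' c \<in> {0,1}"
    "\<bar>det (mat n n (\<lambda>(r,c). w c r))\<bar> \<le> 2 ^ card C * \<bar>det (mat n n (\<lambda>(r,c). if c \<in> C then u c r + s' c * w c r else w c r))\<bar>"
    by auto
  define DC where "DC = det (mat n n (\<lambda>(r,c). if c \<in> C then u c r + s' c * w c r else w c r))"
  define G where "G t = det (mat n n (\<lambda>(r,c). if c \<in> insert c0 C then u c r + (s'(c0:=t)) c * w c r else w c r))" for t
  define U where "U = det (mat n n (\<lambda>(r,c). if c = c0 then u c0 r else (if c \<in> C then u c r + s' c * w c r else w c r)))"
  have c0: "c0 < n" using insert by auto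
  have G: "G t = U + t * DC" for t
    unfolding G_def U_def DC_def by (rule det_col_lin2[where cz=c0]) (use insert c0 in auto)
  obtain t where t: "t \<in> {0,1}" "\<bar>DC\<bar> \<le> 2 * \<bar>G t\<bar>"
  proof (cases "\<bar>G 0\<bar> \<le> \<bar>G 1\<bar>")
    case True
    have "\<bar>DC\<bar> \<le> 2 * \<bar>G 1\<bar>" using True G[of 0] G[of 1] by linarith
    then show ?thesis using that by blast
  next
    case False
    have "\<bar>DC\<bar> \<le> 2 * \<bar>G 0\<bar>" using False G[of 0] G[of 1] by linarith
    then show ?thesis using that by blast
  qed
  show ?case
  proof (intro exI conjI)
    show "\<forall>c. (s'(c0:=t)) c \<in> {0,1}" using s'(1) t(1) by auto
    have "\<bar>det (mat n n (\<lambda>(r,c). w c r))\<bar> \<le> 2 ^ card C * \<bar>DC\<bar>" using s'(2) unfolding DC_def .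
    also have "\<dots> \<le> 2 ^ card C * (2 * \<bar>G t\<bar>)" using t(2) by simp
    also have "\<dots> = 2 ^ card (insert c0 C) * \<bar>G t\<bar>" using insert by simp
    finally show "\<bar>det (mat n n (\<lambda>(r,c). w c r))\<bar> \<le> 2 ^ card (insert c0 C) *
       \<bar>det (mat n n (\<lambda>(r,c). if c \<in> insert c0 C then u c r + (s'(c0:=t)) c * w c r else w c r))\<bar>"
      unfolding G_def .
  qed
qed

lemma ztheta_upd:
  assumes "i \<in> {1..p}" "j \<in> {1..q}"
  shows "ztheta p q (\<theta>((i,j):=y)) z m r = ztheta p q (\<theta>((i,j):=0)) z m r + (if m = i then y * z (p+j) r else 0)"
proof (cases "m = i")
  case True
  have S: "(\<Sum>j'=1..q. (\<theta>((i,j):=t)) (i,j') * z (p+j') r) = t * z (p+j) r + (\<Sum>j'\<in>{1..q}-{j}. \<theta>(i,j') * z (p+j') r)" for t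
    by (subst sum.remove[of _ j]) (use assms in \<open>auto intro!: sum.cong\<close>)
  have Z: "ztheta p q \<theta>' z i r = z i r + (\<Sum>j'=1..q. \<theta>' (i,j') * z (p+j') r)" for \<theta>'
    using assms by (simp add: ztheta_def)
  show ?thesis unfolding True Z S by simp
next
  case False
  have S: "(\<Sum>j'=1..q. (\<theta>((i,j):=t)) (m,j') * z (p+j') r) = (\<Sum>j'=1..q. \<theta> (m,j') * z (p+j') r)" for t
    using False by (intro sum.cong) auto
  show ?thesis using False unfolding ztheta_def by (simp add: S)
qed

lemma maff_zdet:
  assumes I: "finite I" "card I = l"
  shows "maff ({1..p}\<times>{1..q}) (\<lambda>\<theta>. zdet l (ztheta p q \<theta> z) I)"
  unfolding maff_def
proof (intro ballI allI)
  fix k \<theta> y assume k: "k \<in> {1..p}\<times>{1..q}"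
  obtain i j where ij: "k = (i,j)" "i \<in> {1..p}" "j \<in> {1..q}" using k by auto
  define xs where "xs = sorted_list_of_set I"
  have lxs: "length xs = l" "distinct xs" using I by (auto simp: xs_def)
  define F0 where "F0 c r = ztheta p q (\<theta>(k:=0)) z (xs!c) r" for c r
  have zd: "zdet l (ztheta p q \<theta>' z) I = det (mat l l (\<lambda>(r,c). ztheta p q \<theta>' z (xs!c) r))" for \<theta>'
    unfolding zdet_def xs_def ..
  have "\<exists>W. \<forall>t. zdet l (ztheta p q (\<theta>(k:=t)) z) I = zdet l (ztheta p q (\<theta>(k:=0)) z) I + t * W"
  proof (cases "i \<in> set xs")
    case True
    obtain c0 where c0: "c0 < l" "xs ! c0 = i" using True lxs by (metis in_set_conv_nth)
    have cne: "c < l \<Longrightarrow> c \<noteq> c0 \<Longrightarrow> xs ! c \<noteq> i" for c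
      using c0 lxs nth_eq_iff_index_eq by (metis (no_types))
    show ?thesis
    proof (intro exI allI)
      fix t
      have A1: "F0 c r = ztheta p q (\<theta>(k:=t)) z (xs!c) r" if "c \<noteq> c0" "c < l" for c r
        using cne[OF that(2,1)] ij unfolding F0_def by (simp add: ztheta_upd[where \<theta>=\<theta> and y=t])
      have A3: "ztheta p q (\<theta>(k:=t)) z (xs!c0) r = F0 c0 r + t * z (p+j) r" for r
        using c0 ij unfolding F0_def by (simp add: ztheta_upd[where \<theta>=\<theta> and y=t])
      show "zdet l (ztheta p q (\<theta>(k:=t)) z) I = zdet l (ztheta p q (\<theta>(k:=0)) z) I +
        t * det (mat l l (\<lambda>(r,c). if c = c0 then z (p+j) r else F0 c r))"
        unfolding zd F0_def[symmetric]
        by (rule det_col_lin2[where cz=c0 and F="\<lambda>c r. ztheta p q (\<theta>(k:=t)) z (xs!c) r"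
              and Fa=F0 and Fb="\<lambda>c r. if c = c0 then z (p+j) r else F0 c r"])
           (use c0 A1 A3 in auto)
    qed
  next
    case False
    have "zdet l (ztheta p q (\<theta>(k:=t)) z) I = zdet l (ztheta p q (\<theta>(k:=0)) z) I" for t
      unfolding zd
    proof (rule arg_cong[where f=det], rule eq_matI)
      fix r c assume "r < dim_row (mat l l (\<lambda>(r,c). ztheta p q (\<theta>(k:=0)) z (xs!c) r))"
        "c < dim_col (mat l l (\<lambda>(r,c). ztheta p q (\<theta>(k:=0)) z (xs!c) r))"
      then have rc: "r < l" "c < l" by auto
      then have "xs ! c \<noteq> i" using False lxs by (metis nth_mem)
      then show "mat l l (\<lambda>(r,c). ztheta p q (\<theta>(k:=t)) z (xs!c) r) $$ (r,c) =
         mat l l (\<lambda>(r,c). ztheta p q (\<theta>(k:=0)) z (xs!c) r) $$ (r,c)"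
        using rc ij by (simp add: ztheta_upd[where \<theta>=\<theta> and y=t])
    qed auto
    then show ?thesis by (intro exI[of _ 0]) simp
  qed
  then obtain W where W: "\<And>t. zdet l (ztheta p q (\<theta>(k:=t)) z) I = zdet l (ztheta p q (\<theta>(k:=0)) z) I + t * W"
    by blast
  show "zdet l (ztheta p q (\<theta>(k:=y)) z) I = zdet l (ztheta p q (\<theta>(k:=0)) z) I +
     y * (zdet l (ztheta p q (\<theta>(k:=1)) z) I - zdet l (ztheta p q (\<theta>(k:=0)) z) I)"
    using W[of y] W[of 1] by simp
qed

lemma zdet_meas:
  assumes sb: "\<And>k. k \<in> {1..p}\<times>{1..q} \<Longrightarrow> sets (M k) = sets borel"
  shows "(\<lambda>\<theta>. zdet l (ztheta p q \<theta> z) I) \<in> borel_measurable (PiM ({1..p}\<times>{1..q}) M)"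
proof -
  let ?K = "{1..p}\<times>{1..q}"
  define xs where "xs = sorted_list_of_set I"
  have comp: "(\<lambda>\<theta>. \<theta> (m,j)) \<in> borel_measurable (PiM ?K M)" if "(m,j) \<in> ?K" for m j
  proof -
    have "(\<lambda>\<theta>. \<theta> (m,j)) \<in> measurable (PiM ?K M) (M (m,j))"
      by (rule measurable_component_singleton[OF that])
    then show ?thesis using measurable_cong_sets[OF refl sb[OF that]] by blast
  qed
  have ent: "(\<lambda>\<theta>. ztheta p q \<theta> z m r) \<in> borel_measurable (PiM ?K M)" for m r
  proof (cases "1 \<le> m \<and> m \<le> p")
    case True
    have "(\<lambda>\<theta>. z m r + (\<Sum>j=1..q. \<theta> (m,j) * z (p+j) r)) \<in> borel_measurable (PiM ?K M)"
      by (intro borel_measurable_add borel_measurable_const borel_measurable_sum borel_measurable_times comp)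
         (use True in auto)
    then show ?thesis using True unfolding ztheta_def by simp
  next
    case False
    have "ztheta p q \<theta> z m = z m" for \<theta> using False unfolding ztheta_def by auto
    then show ?thesis by simp
  qed
  have eq: "zdet l (ztheta p q \<theta> z) I = (\<Sum>\<pi> \<in> {\<pi>. \<pi> permutes {0..<l}}. signof \<pi> * (\<Prod>i = 0..<l. ztheta p q \<theta> z (xs ! \<pi> i) i))" for \<theta>
  proof -
    have "zdet l (ztheta p q \<theta> z) I = (\<Sum>\<pi> \<in> {\<pi>. \<pi> permutes {0..<l}}. signof \<pi> *
        (\<Prod>i = 0..<l. mat l l (\<lambda>(r,c). ztheta p q \<theta> z (xs!c) r) $$ (i, \<pi> i)))"
      unfolding zdet_def xs_def by (rule det_def') simp
    also have "\<dots> = (\<Sum>\<pi> \<in> {\<pi>. \<pi> permutes {0..<l}}. signof \<pi> * (\<Prod>i = 0..<l. ztheta p q \<theta> z (xs ! \<pi> i) i))"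
    proof (rule sum.cong[OF refl])
      fix \<pi> assume "\<pi> \<in> {\<pi>. \<pi> permutes {0..<l}}"
      then have pj: "i < l \<Longrightarrow> \<pi> i < l" for i using permutes_in_image[of \<pi> "{0..<l}" i] by simp
      show "signof \<pi> * (\<Prod>i = 0..<l. mat l l (\<lambda>(r,c). ztheta p q \<theta> z (xs!c) r) $$ (i, \<pi> i)) =
        signof \<pi> * (\<Prod>i = 0..<l. ztheta p q \<theta> z (xs ! \<pi> i) i)"
        by (intro arg_cong2[where f="(*)"] refl prod.cong) (auto simp: pj)
    qed
    finally show ?thesis .
  qed
  show ?thesis unfolding eq
    by (intro borel_measurable_sum borel_measurable_times borel_measurable_const borel_measurable_prod ent)
qed

lemma choose_I_gen:
  assumes J: "J \<in> Sset p q l" and A': "A' \<subseteq> {1..p} - J" and B1: "B1 \<subseteq> J \<inter> {p+1..p+q}"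
    and c: "card A' = card B1" and m: "card (A' \<union> (J \<inter> {1..p})) = min p l"
  shows "\<exists>I A' g. I \<in> Splus p q l \<and> A' \<subseteq> I \<inter> {1..p} \<and> bij_betw g I J \<and> (\<forall>i\<in>I-A'. g i = i)
     \<and> (\<forall>i\<in>A'. g i \<in> {p+1..p+q})"
proof -
  have Jf: "J \<subseteq> {1..p+q}" "card J = l" using J by (auto simp: Sset_def)
  have fJ: "finite J" using Jf(1) finite_subset by blast
  have fA: "finite A'" using A' finite_subset by blast
  have fB: "finite B1" using B1 fJ finite_subset by blast
  obtain h where h: "bij_betw h A' B1" using finite_same_card_bij[OF fA fB c] by blast
  define g where "g i = (if i \<in> A' then h i else i)" for i
  define I where "I = (J - B1) \<union> A'"
  have bg1: "bij_betw g A' B1" using h by (rule bij_betw_cong[THEN iffD1, rotated]) (simp add: g_def)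
  have bg2: "bij_betw g (J - B1) (J - B1)"
    by (rule bij_betw_cong[THEN iffD1, rotated, of id]) (use A' in \<open>auto simp: g_def\<close>)
  have bg: "bij_betw g I J"
  proof -
    have "bij_betw g ((J - B1) \<union> A') ((J - B1) \<union> B1)"
      by (rule bij_betw_combine[OF bg2 bg1]) auto
    moreover have "(J - B1) \<union> B1 = J" using B1 by auto
    ultimately show ?thesis unfolding I_def by simp
  qed
  have IS: "I \<in> Splus p q l"
  proof -
    have "I \<subseteq> {1..p+q}" unfolding I_def using A' Jf by auto
    moreover have "card I = l"
      using bij_betw_same_card[OF bg] Jf by simp
    moreover have "I \<inter> {1..p} = A' \<union> (J \<inter> {1..p})" unfolding I_def using A' B1 by auto
    ultimately show ?thesis using m by (simp add: Splus_def Sset_def)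
  qed
  show ?thesis
    apply (rule exI[of _ I], rule exI[of _ A'], rule exI[of _ g])
    using IS bg bij_betwE[OF h] B1 A' by (auto simp: I_def g_def)
qed

lemma choose_I:
  assumes J: "J \<in> Sset p q l"
  shows "\<exists>I A' g. I \<in> Splus p q l \<and> A' \<subseteq> I \<inter> {1..p} \<and> bij_betw g I J \<and> (\<forall>i\<in>I-A'. g i = i)
     \<and> (\<forall>i\<in>A'. g i \<in> {p+1..p+q})"
proof -
  have Jf: "J \<subseteq> {1..p+q}" "card J = l" using J by (auto simp: Sset_def)
  have fJ: "finite J" using Jf(1) finite_subset by blast
  define A where "A = J \<inter> {1..p}"
  define B where "B = J \<inter> {p+1..p+q}"
  have JAB: "J = A \<union> B" "A \<inter> B = {}" using Jf unfolding A_def B_def by auto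
  have fA: "finite A" "finite B" using fJ unfolding A_def B_def by auto
  have cJ: "card A + card B = l" using card_Un_disjoint[OF fA JAB(2)] JAB Jf by simp
  have cA: "card A \<le> p" unfolding A_def by (metis card_atLeastAtMost diff_Suc_1 card_mono finite_atLeastAtMost inf_le2)
  have cR: "card ({1..p} - J) = p - card A"
  proof -
    have "{1..p} - J = {1..p} - A" unfolding A_def by auto
    then show ?thesis using card_Diff_subset[of A "{1..p}"] fA unfolding A_def by auto
  qed
  show ?thesis
  proof (cases "l \<le> p")
    case True
    have "card B \<le> card ({1..p} - J)" using cR cJ True by simp
    then obtain A' where A': "A' \<subseteq> {1..p} - J" "card A' = card B"
      by (meson obtain_subset_with_card_n)
    have fA': "finite A'" using A'(1) finite_subset by blast
    have "card (A' \<union> (J \<inter> {1..p})) = card A' + card A"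
      using A'(1) fA' fA unfolding A_def by (subst card_Un_disjoint) auto
    then have "card (A' \<union> (J \<inter> {1..p})) = min p l" using A'(2) cJ True by simp
    from choose_I_gen[OF J A'(1) _ A'(2) this] show ?thesis by (simp add: B_def)
  next
    case False
    have "p - card A \<le> card B" using cJ False by simp
    then obtain B1 where B1: "B1 \<subseteq> B" "card B1 = p - card A"
      by (meson obtain_subset_with_card_n)
    have "A' \<union> (J \<inter> {1..p}) = {1..p}" if "A' = {1..p} - J" for A' :: "nat set" using that by auto
    then have "card (({1..p} - J) \<union> (J \<inter> {1..p})) = min p l" using False by simp
    from choose_I_gen[OF J _ _ _ this, of B1] show ?thesis using B1 cR by (auto simp: B_def)
  qed
qed

lemma det_list_perm:
  fixes f :: "nat \<Rightarrow> nat \<Rightarrow> real"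
  assumes "distinct xs" "distinct ys" "set xs = set ys" "length ys = n"
  shows "\<bar>det (mat n n (\<lambda>(r,c). f (xs ! c) r))\<bar> = \<bar>det (mat n n (\<lambda>(r,c). f (ys ! c) r))\<bar>"
proof -
  have "mset xs = mset ys" using assms set_eq_iff_mset_eq_distinct by blast
  then obtain \<pi> where \<pi>: "\<pi> permutes {..<length ys}" "permute_list \<pi> ys = xs" by (rule mset_eq_permutation)
  have \<pi>': "\<pi> permutes {0..<n}" using \<pi>(1) assms(4) by (simp add: atLeast0LessThan)
  have "mat n n (\<lambda>(r,c). f (xs ! c) r) = mat n n (\<lambda>(r,c). f (ys ! \<pi> c) r)"
  proof (rule eq_matI)
    fix i j assume "i < dim_row (mat n n (\<lambda>(r,c). f (ys ! \<pi> c) r))" "j < dim_col (mat n n (\<lambda>(r,c). f (ys ! \<pi> c) r))"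
    then have ij: "i < n" "j < n" by auto
    have "xs ! j = ys ! \<pi> j" using permute_list_nth[OF \<pi>(1)] \<pi>(2) assms(4) ij by metis
    then show "mat n n (\<lambda>(r,c). f (xs ! c) r) $$ (i, j) = mat n n (\<lambda>(r,c). f (ys ! \<pi> c) r) $$ (i, j)"
      using ij by simp
  qed auto
  then have "det (mat n n (\<lambda>(r,c). f (xs ! c) r)) = signof \<pi> * det (mat n n (\<lambda>(r,c). f (ys ! c) r))"
    using det_perm_cols[OF \<pi>', of "\<lambda>c r. f (ys ! c) r"] by simp
  moreover have "\<bar>(signof \<pi> :: real)\<bar> = 1" by (cases \<pi> rule: sign_cases) auto
  ultimately show ?thesis by (simp add: abs_mult)
qed

lemma zcorner:
  assumes J: "J \<in> Sset p q l" and zJ: "\<bar>zdet l z J\<bar> = 1"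
  shows "\<exists>I \<in> Splus p q l. \<exists>\<theta>0 \<in> PiE ({1..p}\<times>{1..q}) (\<lambda>_. {0::real,1}).
           1 \<le> 2 ^ l * \<bar>zdet l (ztheta p q \<theta>0 z) I\<bar>"
proof -
  obtain I A' g where IAg: "I \<in> Splus p q l" "A' \<subseteq> I \<inter> {1..p}" "bij_betw g I J"
     "\<forall>i\<in>I-A'. g i = i" "\<forall>i\<in>A'. g i \<in> {p+1..p+q}"
    using choose_I[OF J] by blast
  have IS: "I \<subseteq> {1..p+q}" "card I = l" using IAg(1) by (auto simp: Splus_def Sset_def)
  have JS: "J \<subseteq> {1..p+q}" "card J = l" using J by (auto simp: Sset_def)
  have fI: "finite I" using IS(1) finite_subset by blast
  have fJ: "finite J" using JS(1) finite_subset by blast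
  define xs where "xs = sorted_list_of_set I"
  define ys where "ys = sorted_list_of_set J"
  have xs: "distinct xs" "length xs = l" "set xs = I" using fI IS by (auto simp: xs_def)
  have ys: "distinct ys" "length ys = l" "set ys = J" using fJ JS by (auto simp: ys_def)
  define C where "C = {c. c < l \<and> xs ! c \<in> A'}"
  define u where "u c = z (xs ! c)" for c
  define w where "w c = z (g (xs ! c))" for c
  have fC: "finite C" "C \<subseteq> {0..<l}" by (auto simp: C_def)
  obtain s where s: "\<forall>c. s c \<in> {0,1}" "\<bar>det (mat l l (\<lambda>(r,c). w c r))\<bar> \<le>
     2 ^ card C * \<bar>det (mat l l (\<lambda>(r,c). if c \<in> C then u c r + s c * w c r else w c r))\<bar>"
    using corner[OF fC, of w u] by blast
  have W: "\<bar>det (mat l l (\<lambda>(r,c). w c r))\<bar> = 1"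
  proof -
    have inj: "inj_on g I" using IAg(3) by (rule bij_betw_imp_inj_on)
    have d: "distinct (map g xs)" using xs inj by (simp add: distinct_map)
    have st: "set (map g xs) = set ys" using IAg(3) xs ys by (simp add: bij_betw_def)
    have "mat l l (\<lambda>(r,c). w c r) = mat l l (\<lambda>(r,c). z (map g xs ! c) r)"
      by (rule eq_matI) (auto simp: w_def xs)
    then show ?thesis using det_list_perm[OF d ys(1) st ys(2), of z] zJ
      by (simp add: zdet_def ys_def)
  qed
  define idx where "idx i = (THE c. c < l \<and> xs ! c = i)" for i
  have idx: "idx (xs ! c) = c" if "c < l" for c
    unfolding idx_def by (rule the_equality) (use that xs nth_eq_iff_index_eq in auto)
  define \<theta>0 where "\<theta>0 = restrict (\<lambda>(i,j). if i \<in> A' \<and> j = g i - p then s (idx i) else 0) ({1..p}\<times>{1..q})"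
  have t0: "\<theta>0 \<in> PiE ({1..p}\<times>{1..q}) (\<lambda>_. {0::real,1})"
    using s(1) unfolding \<theta>0_def by (auto simp: PiE_iff)
  have col: "ztheta p q \<theta>0 z (xs ! c) r = (if c \<in> C then u c r + s c * w c r else w c r)"
    if c: "c < l" for c r
  proof -
    let ?m = "xs ! c"
    have mI: "?m \<in> I" using c xs by auto
    show ?thesis
    proof (cases "?m \<in> A'")
      case True
      have cC: "c \<in> C" using True c by (simp add: C_def)
      have mp: "1 \<le> ?m \<and> ?m \<le> p" using True IAg(2) by auto
      have gm: "g ?m \<in> {p+1..p+q}" using True IAg(5) by auto
      have jj: "g ?m - p \<in> {1..q}" using gm by auto
      have S1: "(\<Sum>j=1..q. if j = g ?m - p then s c * z (p+j) r else 0) = s c * z (p + (g ?m - p)) r"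
        using jj by (subst sum.delta) auto
      have "(\<Sum>j=1..q. \<theta>0 (?m,j) * z (p+j) r) = (\<Sum>j=1..q. if j = g ?m - p then s c * z (p+j) r else 0)"
        by (rule sum.cong) (use True mp idx[OF c] in \<open>auto simp: \<theta>0_def\<close>)
      also have "\<dots> = s c * z (p + (g ?m - p)) r" by (rule S1)
      also have "\<dots> = s c * w c r" using gm by (simp add: w_def)
      finally show ?thesis using cC mp by (simp add: ztheta_def u_def)
    next
      case False
      have cC: "c \<notin> C" using False by (simp add: C_def)
      have gm: "g ?m = ?m" using False mI IAg(4) by auto
      show ?thesis
      proof (cases "1 \<le> ?m \<and> ?m \<le> p")
        case True
        have "(\<Sum>j=1..q. \<theta>0 (?m,j) * z (p+j) r) = 0"
          by (rule sum.neutral) (use False True in \<open>auto simp: \<theta>0_def\<close>)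
        then show ?thesis using cC gm True by (simp add: ztheta_def w_def)
      next
        case F2: False
        then show ?thesis using cC gm unfolding ztheta_def w_def by auto
      qed
    qed
  qed
  have "mat l l (\<lambda>(r,c). if c \<in> C then u c r + s c * w c r else w c r) = mat l l (\<lambda>(r,c). ztheta p q \<theta>0 z (xs ! c) r)"
    by (rule eq_matI) (auto simp: col)
  then have "1 \<le> 2 ^ card C * \<bar>zdet l (ztheta p q \<theta>0 z) I\<bar>"
    using s(2) W by (simp add: zdet_def xs_def)
  also have "\<dots> \<le> 2 ^ l * \<bar>zdet l (ztheta p q \<theta>0 z) I\<bar>"
  proof -
    have "card C \<le> l" using card_mono[OF _ fC(2)] by simp
    then have "(2::real) ^ card C \<le> 2 ^ l" by (rule power_increasing) simp
    then show ?thesis by (rule mult_right_mono) simp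
  qed
  finally show ?thesis using IAg(1) t0 by blast
qed



theorem lemma3p2:
  fixes p q l :: nat and F :: "'f set"
    and \<nu> :: "'f \<Rightarrow> nat \<Rightarrow> nat \<Rightarrow> real measure"
    and lam C1 C2 :: real
  assumes "l \<le> p + q"
    and "lam > 0" and "C1 > 0" and "C2 > 0"
    and borel: "\<And>\<rho> i j. \<rho> \<in> F \<Longrightarrow> i \<in> {1..p} \<Longrightarrow> j \<in> {1..q} \<Longrightarrow>
        sets (\<nu> \<rho> i j) = sets borel"
    and ball: "\<And>\<rho> i j x y. \<rho> \<in> F \<Longrightarrow> i \<in> {1..p} \<Longrightarrow> j \<in> {1..q} \<Longrightarrow> y > 0 \<Longrightarrow>
        emeasure (\<nu> \<rho> i j) {x - y..x + y} \<le> ennreal (C1 * y powr lam)"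
    and supp: "\<And>\<rho> i j. \<rho> \<in> F \<Longrightarrow> i \<in> {1..p} \<Longrightarrow> j \<in> {1..q} \<Longrightarrow>
        emeasure (\<nu> \<rho> i j) (UNIV - {-C2..C2}) = 0"
  shows "\<exists>C3 > 0. \<exists>\<delta> > 0. \<forall>z :: nat \<Rightarrow> nat \<Rightarrow> real.
      Max ((\<lambda>I. \<bar>zdet l z I\<bar>) ` Sset p q l) = 1 \<longrightarrow>
      (\<forall>\<rho> \<in> F. \<forall>\<epsilon> :: real. 0 < \<epsilon> \<and> \<epsilon> < 1 \<longrightarrow>
        emeasure (PiM ({1..p} \<times> {1..q}) (\<lambda>(i, j). \<nu> \<rho> i j))
          {\<theta> \<in> space (PiM ({1..p} \<times> {1..q}) (\<lambda>(i, j). \<nu> \<rho> i j)).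
             Max ((\<lambda>I. \<bar>zdet l (ztheta p q \<theta> z) I\<bar>) ` Splus p q l) \<le> \<epsilon>}
        \<le> ennreal (C3 * \<epsilon> powr \<delta>))"
proof -
  let ?K = "{1..p}\<times>{1..q}"
  obtain C \<delta> where C: "C > 0" "\<delta> > 0" and G: "Good ?K lam C1 C2 C \<delta>"
    using Good_exists[of ?K lam C1 C2] assms(2,3,4) by auto
  have finS: "finite (Sset p q l)"
    by (rule finite_subset[of _ "Pow {1..p+q}"]) (auto simp: Sset_def)
  have finSp: "finite (Splus p q l)"
    by (rule finite_subset[OF _ finS]) (auto simp: Splus_def)
  have neS: "Sset p q l \<noteq> {}"
  proof -
    obtain T where "T \<subseteq> {1..p+q}" "card T = l"
      using obtain_subset_with_card_n[of l "{1..p+q}"] assms(1) by auto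
    then show ?thesis by (auto simp: Sset_def)
  qed
  have main: "\<forall>z :: nat \<Rightarrow> nat \<Rightarrow> real.
      Max ((\<lambda>I. \<bar>zdet l z I\<bar>) ` Sset p q l) = 1 \<longrightarrow>
      (\<forall>\<rho> \<in> F. \<forall>\<epsilon> :: real. 0 < \<epsilon> \<and> \<epsilon> < 1 \<longrightarrow>
        emeasure (PiM ({1..p} \<times> {1..q}) (\<lambda>(i, j). \<nu> \<rho> i j))
          {\<theta> \<in> space (PiM ({1..p} \<times> {1..q}) (\<lambda>(i, j). \<nu> \<rho> i j)).
             Max ((\<lambda>I. \<bar>zdet l (ztheta p q \<theta> z) I\<bar>) ` Splus p q l) \<le> \<epsilon>}
        \<le> ennreal (C * (2 ^ l) powr \<delta> * \<epsilon> powr \<delta>))"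
  proof (intro allI impI ballI)
    fix z :: "nat \<Rightarrow> nat \<Rightarrow> real" and \<rho> and \<epsilon> :: real
    assume Mx: "Max ((\<lambda>I. \<bar>zdet l z I\<bar>) ` Sset p q l) = 1" and \<rho>: "\<rho> \<in> F"
      and e: "0 < \<epsilon> \<and> \<epsilon> < 1"
    obtain J where J: "J \<in> Sset p q l" "\<bar>zdet l z J\<bar> = 1"
      using Max_in[of "(\<lambda>I. \<bar>zdet l z I\<bar>) ` Sset p q l"] finS neS Mx by auto
    obtain I \<theta>0 where I: "I \<in> Splus p q l" and t0: "\<theta>0 \<in> PiE ?K (\<lambda>_. {0::real,1})"
      and c0: "1 \<le> 2 ^ l * \<bar>zdet l (ztheta p q \<theta>0 z) I\<bar>"
      using zcorner[OF J] by blast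
    define \<nu>' where "\<nu>' k = (if k \<in> ?K then \<nu> \<rho> (fst k) (snd k) else null_measure borel)" for k
    have g: "\<forall>k. goodm lam C1 C2 (\<nu>' k)"
    proof
      fix k
      show "goodm lam C1 C2 (\<nu>' k)"
      proof (cases "k \<in> ?K")
        case True
        then obtain i j where k: "k = (i,j)" "i \<in> {1..p}" "j \<in> {1..q}" by auto
        show ?thesis unfolding goodm_def \<nu>'_def using True k borel[OF \<rho> k(2,3)] ball[OF \<rho> k(2,3)] supp[OF \<rho> k(2,3)]
          by auto
      next
        case False
        show ?thesis unfolding goodm_def \<nu>'_def using False by simp
      qed
    qed
    have PiMeq: "PiM ?K \<nu>' = PiM ?K (\<lambda>(i, j). \<nu> \<rho> i j)"
      by (rule PiM_cong) (auto simp: \<nu>'_def)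
    define P where "P \<theta> = 2 ^ l * zdet l (ztheta p q \<theta> z) I" for \<theta>
    have sb: "\<And>k. k \<in> ?K \<Longrightarrow> sets (\<nu>' k) = sets borel" using g unfolding goodm_def by blast
    have Pm: "P \<in> borel_measurable (PiM ?K \<nu>')"
      unfolding P_def using zdet_meas[of p q \<nu>' l z I, OF sb] by measurable
    have IS: "finite I" "card I = l" using I by (auto simp: Splus_def Sset_def intro: finite_subset)
    have mP: "maff ?K P"
      using maff_lin[OF maff_zdet[OF IS] maff_zdet[OF IS], where a="2 ^ l" and b=0] unfolding P_def by simp
    have cP: "\<exists>\<theta>0\<in>PiE ?K (\<lambda>_. {0::real,1}). 1 \<le> \<bar>P \<theta>0\<bar>"
      using t0 c0 by (auto simp: P_def abs_mult)
    have el: "2 ^ l * \<epsilon> > 0" using e by simp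
    have B: "emeasure (PiM ?K \<nu>') {\<theta> \<in> space (PiM ?K \<nu>'). \<bar>P \<theta>\<bar> \<le> 2 ^ l * \<epsilon>} \<le> ennreal (C * (2 ^ l * \<epsilon>) powr \<delta>)"
      by (rule G[unfolded Good_def, rule_format, of \<nu>' P]) (use g Pm mP cP el in auto)
    have sub: "{\<theta> \<in> space (PiM ?K \<nu>'). Max ((\<lambda>I. \<bar>zdet l (ztheta p q \<theta> z) I\<bar>) ` Splus p q l) \<le> \<epsilon>}
       \<subseteq> {\<theta> \<in> space (PiM ?K \<nu>'). \<bar>P \<theta>\<bar> \<le> 2 ^ l * \<epsilon>}"
    proof safe
      fix \<theta> assume "Max ((\<lambda>I. \<bar>zdet l (ztheta p q \<theta> z) I\<bar>) ` Splus p q l) \<le> \<epsilon>"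
      moreover have "\<bar>zdet l (ztheta p q \<theta> z) I\<bar> \<le> Max ((\<lambda>I. \<bar>zdet l (ztheta p q \<theta> z) I\<bar>) ` Splus p q l)"
        using I finSp by (intro Max_ge) auto
      ultimately show "\<bar>P \<theta>\<bar> \<le> 2 ^ l * \<epsilon>" by (simp add: P_def abs_mult)
    qed
    have "emeasure (PiM ?K \<nu>') {\<theta> \<in> space (PiM ?K \<nu>'). Max ((\<lambda>I. \<bar>zdet l (ztheta p q \<theta> z) I\<bar>) ` Splus p q l) \<le> \<epsilon>}
       \<le> emeasure (PiM ?K \<nu>') {\<theta> \<in> space (PiM ?K \<nu>'). \<bar>P \<theta>\<bar> \<le> 2 ^ l * \<epsilon>}"
      by (rule emeasure_mono[OF sub]) (use Pm in measurable)
    also note B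
    also have "C * (2 ^ l * \<epsilon>) powr \<delta> = C * (2 ^ l) powr \<delta> * \<epsilon> powr \<delta>"
      using e by (simp add: powr_mult)
    finally show "emeasure (PiM ?K (\<lambda>(i, j). \<nu> \<rho> i j))
          {\<theta> \<in> space (PiM ?K (\<lambda>(i, j). \<nu> \<rho> i j)).
             Max ((\<lambda>I. \<bar>zdet l (ztheta p q \<theta> z) I\<bar>) ` Splus p q l) \<le> \<epsilon>}
        \<le> ennreal (C * (2 ^ l) powr \<delta> * \<epsilon> powr \<delta>)"
      unfolding PiMeq .
  qed
  show ?thesis
    apply (rule exI[of _ "C * (2 ^ l) powr \<delta>"], rule conjI)
     apply (simp add: C)
    apply (rule exI[of _ \<delta>], rule conjI)
     apply (simp add: C)
    apply (rule main)
    done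
qed

end
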